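(* Consider two circular bodies in $\mathbb R^2$ of equal mass ($\mu_1=\mu_2=1/2$) and radii $R_1,R_2$, moving on elliptic Keplerian orbits about a fixed center and interacting only by elastic or inelastic collisions, as described in the context; let $D=R_1+R_2$. Let $\gamma=2L^2/D>1$ and $e=\gamma-\sqrt{\gamma^2-\gamma+1}$. If $$EL^2<-\frac{(1-e^2)(1+e)^2}{16e^2},$$ then the two bodies remain on elliptic orbits.
   Context: Units are chosen so that each body's center $\mathbf x_i\in\mathbb R^2$ moves, between collisions, with acceleration $-\mathbf x_i/|\mathbf x_i|^3$ (fixed attracting center at the origin; no mutual gravitation). Bodies have masses $m_1,m_2$, $\mu_i=m_i/(m_1+m_2)$. Specific energy $E_i=|\mathbf v_i|^2/2-1/|\mathbf x_i|$, signed specific angular momentum $L_i=x_{i,1}v_{i,2}-x_{i,2}v_{i,1}$; the orbit of body $i$ is elliptic iff $E_i<0$. Set $E=\mu_1E_1+\mu_2E_2$, $L=\mu_1L_1+\mu_2L_2$. A collision occurs when $|\mathbf x_1-\mathbf x_2|=D$ and $\mathbf n\cdot\mathbf w<0$, where $\mathbf n=(\mathbf x_1-\mathbf x_2)/D$, $\mathbf w=\mathbf v_1-\mathbf v_2$; then $\mathbf w'=(I-\mathbf n\otimes\mathbf n)\mathbf w-(1-2\varepsilon)(\mathbf n\otimes\mathbf n)\mathbf w$ with $\varepsilon\in[0,1/2]$ ($\varepsilon=0$ elastic), and with $\mathbf v=\mu_1\mathbf v_1+\mu_2\mathbf v_2$ the outgoing velocities are $\mathbf v_1'=\mathbf v+\mu_2\mathbf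 w'$, $\mathbf v_2'=\mathbf v-\mu_1\mathbf w'$. *)

theory Defs
  imports "HOL-Analysis.Analysis"
begin

definition kepler_acc :: "real^2 \<Rightarrow> real^2" where
  "kepler_acc x = - ((1 / norm x ^ 3) *\<^sub>R x)"

definition spec_energy :: "real^2 \<Rightarrow> real^2 \<Rightarrow> real" where
  "spec_energy x v = norm v ^ 2 / 2 - 1 / norm x"

definition ang_mom :: "real^2 \<Rightarrow> real^2 \<Rightarrow> real" where
  "ang_mom x v = x$1 * v$2 - x$2 * v$1"

definition collide_w :: "real \<Rightarrow> real^2 \<Rightarrow> real^2 \<Rightarrow> real^2" where
  "collide_w eps n w = (w - (n \<bullet> w) *\<^sub>R n) - ((1 - 2 * eps) * (n \<bullet> w)) *\<^sub>R n"

definition motion ::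
  "real \<Rightarrow> real \<Rightarrow> real \<Rightarrow> real \<Rightarrow> (real \<Rightarrow> real^2) \<Rightarrow> (real \<Rightarrow> real^2)
     \<Rightarrow> (real \<Rightarrow> real^2) \<Rightarrow> (real \<Rightarrow> real^2) \<Rightarrow> bool" where
  "motion m1 m2 D eps x1 v1 x2 v2 \<longleftrightarrow>
    (let mu1 = m1 / (m1 + m2); mu2 = m2 / (m1 + m2) in
     \<exists>C :: real set. C \<subseteq> {0<..} \<and> (\<forall>T. finite (C \<inter> {..T})) \<and>
       continuous_on {0..} x1 \<and> continuous_on {0..} x2 \<and>
       (\<forall>t\<ge>0. x1 t \<noteq> 0 \<and> x2 t \<noteq> 0 \<and> dist (x1 t) (x2 t) \<ge> D) \<and>
       (\<forall>t. t \<ge> 0 \<and> t \<notin> C \<longrightarrow>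
          (x1 has_vector_derivative v1 t) (at t within {0..}) \<and>
          (v1 has_vector_derivative kepler_acc (x1 t)) (at t within {0..}) \<and>
          (x2 has_vector_derivative v2 t) (at t within {0..}) \<and>
          (v2 has_vector_derivative kepler_acc (x2 t)) (at t within {0..})) \<and>
       (\<forall>t\<in>C. \<exists>u1 u2.
          (v1 \<longlongrightarrow> u1) (at_left t) \<and> (v2 \<longlongrightarrow> u2) (at_left t) \<and>
          (v1 \<longlongrightarrow> v1 t) (at_right t) \<and> (v2 \<longlongrightarrow> v2 t) (at_right t) \<and>
          dist (x1 t) (x2 t) = D \<and>
          (let n = (1 / D) *\<^sub>R (x1 t - x2 t); w = u1 - u2; w' = collide_w eps n w;
               v = mu1 *\<^sub>R u1 + mu2 *\<^sub>R u2
           in n \<bullet> w < 0 \<and> v1 t = v + mu2 *\<^sub>R w' \<and> v2 t = v - mu1 *\<^sub>R w')))"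

end

theory Submission
  imports Defs
begin


lemma amgm: fixes p P :: real assumes "P > 0" shows "p \<le> (p^2/P + P)/2"
proof -
  have "0 \<le> (p - P)^2" by simp
  hence "2*p*P \<le> p^2 + P^2" by (simp add: power2_eq_square algebra_simps)
  thus ?thesis using assms by (simp add: field_simps power2_eq_square)
qed

lemma SRlem: fixes e l::real assumes ne: "1-e \<noteq> 0" "1+e \<noteq> 0" "e \<noteq> 0" "l \<noteq> 0"
 shows "(1-e)*(1+e)*(1+e)^2/(16*e^2*l^2) * ((2*e*l/(1+e))^2/(1-e)) = (1+e)/4"
proof -
  have "(2*e*l/(1+e))^2 = 4*e^2*l^2/(1+e)^2" by (simp add: power_divide power_mult_distrib)
  hence "(1-e)*(1+e)*(1+e)^2/(16*e^2*l^2) * ((2*e*l/(1+e))^2/(1-e))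
     = ((1-e)*(1+e)*(1+e)^2 * (4*e^2*l^2)) / ((16*e^2*l^2) * ((1+e)^2*(1-e)))" by simp
  also have "\<dots> = (1+e)/4"
  proof -
    have M: "(16*e^2*l^2) * ((1+e)^2*(1-e)) \<noteq> 0" using ne by simp
    have "(1-e)*(1+e)*(1+e)^2 * (4*e^2*l^2) = (1+e)/4 * ((16*e^2*l^2) * ((1+e)^2*(1-e)))"
      by (simp add: algebra_simps)
    thus ?thesis using M by (simp add: divide_eq_eq)
  qed
  finally show ?thesis .
qed

lemma fin_aux: fixes a b p q P Q l :: real
  shows "p \<le> (a+P)/2 \<Longrightarrow> q < (b+Q)/2 \<Longrightarrow> a + b \<le> 2*l \<Longrightarrow> P+Q = 2*l \<Longrightarrow> 2*l \<le> p+q \<Longrightarrow> False"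
  by argo

lemma core:
  fixes r1 r2 p q E2 l e D :: real
  assumes r1: "r1 > 0" and r2: "r2 > 0" and rD: "r1 \<le> r2 + D"
    and p: "p \<ge> 0" "p^2 \<le> 2*r1" and q: "q \<ge> 0" "q^2 \<le> 2*r2 + 2*r2^2*E2"
    and l: "l > 0" "2*l \<le> p + q" and e: "0 < e" "e < 1/2"
    and D: "D = 2*l^2*(1-2*e)/(1-e^2)"
  shows "-E2/2 * l^2 \<le> (1-e^2)*(1+e)^2/(16*e^2)"
proof (rule ccontr)
  define S where "S = (1-e^2)*(1+e)^2/(16*e^2*l^2)"
  define P where "P = 2*l/(1+e)"
  define Q where "Q = 2*e*l/(1+e)"
  define R where "R = Q^2/(1-e)"
  have e2: "e^2 < 1" proof -
      have "e*e < 1*1" using e by (intro mult_strict_mono) auto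
      thus ?thesis by (simp add: power2_eq_square)
    qed
  have h2: "1-e^2 = (1-e)*(1+e)" by (simp add: power2_eq_square algebra_simps)
  have ne: "1-e \<noteq> 0" "1+e \<noteq> 0" "e \<noteq> 0" "l \<noteq> 0" using e l by auto
  have Spos: "S > 0" unfolding S_def using e2 e l by (intro divide_pos_pos mult_pos_pos) auto
  assume "\<not> ?thesis"
  hence "-E2/2 > S" using l e unfolding S_def by (simp add: field_simps)
  hence "E2 < -2*S" by linarith
  hence "r2^2*E2 < r2^2*(-2*S)" using r2 by (intro mult_strict_left_mono) auto
  moreover have "r2^2*(-2*S) = -2*(S*r2^2)" by simp
  moreover have "q^2 \<le> 2*r2 + 2*(r2^2*E2)" using q by simp
  ultimately have q2: "q^2 < 2*r2 - 4*S*r2^2" by linarith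
  have PQ: "P > 0" "Q > 0" using l e by (auto simp: P_def Q_def)
  have "p \<le> (p^2/P + P)/2" by (rule amgm) fact
  also have "\<dots> \<le> ((2*r2+2*D)/P + P)/2" using p rD PQ by (simp add: divide_right_mono)
  finally have hp: "p \<le> ((2*r2+2*D)/P + P)/2" .
  have "q \<le> (q^2/Q + Q)/2" by (rule amgm) fact
  also have "\<dots> < ((2*r2 - 4*S*r2^2)/Q + Q)/2" using q2 PQ by (simp add: divide_strict_right_mono)
  finally have hq: "q < ((2*r2 - 4*S*r2^2)/Q + Q)/2" .
  have QP: "Q = e*P" unfolding P_def Q_def by simp
  have SR: "S*R = (1+e)/4" unfolding S_def R_def Q_def h2 using SRlem[OF ne] by simp
  have DR: "2*e*D - 2*l*Q = -(1+e)*R"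
  proof -
    define M where "M = (1-e)*(1+e)"
    have M: "M \<noteq> 0" using ne by (simp add: M_def)
    have "D = (2*l^2*(1-2*e))/M" unfolding D h2 M_def ..
    hence "2*e*D*M = 2*e*((2*l^2*(1-2*e))/M*M)" by simp
    hence a: "2*e*D*M = 4*e*l^2*(1-2*e)" using M by simp
    have b: "2*l*Q*M = 4*e*l^2*(1-e)" unfolding Q_def M_def using ne by (simp add: field_simps power2_eq_square)
    have R1: "R*(1-e) = Q^2" unfolding R_def using ne by simp
    have Q1: "Q*(1+e) = 2*e*l" unfolding Q_def using ne by simp
    have "(1+e)*R*M = (R*(1-e))*(1+e)^2" unfolding M_def by (simp add: algebra_simps power2_eq_square)
    also have "\<dots> = (Q*(1+e))^2" unfolding R1 by (simp add: power_mult_distrib)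
    finally have c: "(1+e)*R*M = 4*e^2*l^2" unfolding Q1 by (simp add: power_mult_distrib)
    have "(2*e*D - 2*l*Q + (1+e)*R)*M = 0" using a b c by (simp add: algebra_simps power2_eq_square)
    hence "2*e*D - 2*l*Q + (1+e)*R = 0" using M by simp
    thus ?thesis by (simp add: algebra_simps)
  qed
  have PQl: "P + Q = 2*l"
  proof -
    have "P + Q = (2*l*(1+e))/(1+e)" unfolding P_def Q_def by (simp add: add_divide_distrib[symmetric] algebra_simps)
    thus ?thesis using ne by simp
  qed
  have X: "Q * ((2*r2+2*D)/P + (2*r2 - 4*S*r2^2)/Q) = e*(2*r2+2*D) + (2*r2 - 4*S*r2^2)"
  proof -
    have "Q * ((2*r2+2*D)/P + (2*r2 - 4*S*r2^2)/Q) = (Q/P)*(2*r2+2*D) + Q*((2*r2 - 4*S*r2^2)/Q)"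
      by (simp add: distrib_left add_divide_distrib)
    also have "Q/P = e" using PQ QP by simp
    also have "Q*((2*r2 - 4*S*r2^2)/Q) = 2*r2 - 4*S*r2^2" using PQ by simp
    finally show ?thesis .
  qed
  also have "\<dots> = 2*l*Q - 4*S*(r2-R)^2"
  proof -
    have "e*(2*r2+2*D) + (2*r2 - 4*S*r2^2) = 2*(1+e)*r2 + (2*e*D - 2*l*Q) + 2*l*Q - 4*S*r2^2"
      by (simp add: algebra_simps)
    also have "\<dots> = 8*(S*R)*r2 - 4*(S*R)*R + 2*l*Q - 4*S*r2^2" unfolding DR SR by (simp add: field_simps)
    also have "\<dots> = 2*l*Q - 4*S*(r2-R)^2" by (simp add: algebra_simps power2_eq_square)
    finally show ?thesis .
  qed
  also have "\<dots> \<le> Q * (2*l)" using Spos by simp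
  finally have "(2*r2+2*D)/P + (2*r2 - 4*S*r2^2)/Q \<le> 2*l" using PQ by simp
  then show False using hp hq PQl l fin_aux by blast
qed


lemma inner2: "(x::real^2) \<bullet> y = x$1 * y$1 + x$2 * y$2"
  by (simp add: inner_vec_def sum_2)

lemma nsq: "norm (x::real^2) ^ 2 = x$1^2 + x$2^2"
  by (simp only: power2_norm_eq_inner inner2) (simp add: power2_eq_square)

lemma angmom_sq: "ang_mom x v ^ 2 \<le> norm x ^ 2 * norm v ^ 2"
proof -
  have "norm x ^ 2 * norm v ^ 2 - ang_mom x v ^ 2 = (x$1 * v$1 + x$2 * v$2)^2"
    unfolding nsq ang_mom_def by (simp add: power2_eq_square algebra_simps)
  thus ?thesis by (smt (verit) zero_le_power2)
qed

lemma static: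
  fixes x1 x2 y1 y2 :: "real^2" and D L e :: real
  assumes dx: "norm (x1 - x2) \<le> D" and x: "x1 \<noteq> 0" "x2 \<noteq> 0"
    and E1: "spec_energy x1 y1 = 0" and e: "0 < e" "e < 1/2" and L0: "L \<noteq> 0"
    and D: "D = 2*L^2*(1-2*e)/(1-e^2)"
    and L: "L = (1/2)*ang_mom x1 y1 + (1/2)*ang_mom x2 y2"
  shows "((1/2) * spec_energy x1 y1 + (1/2) * spec_energy x2 y2) * L^2 \<ge> -((1-e^2)*(1+e)^2)/(16*e^2)"
proof -
  define r1 where "r1 = norm x1"
  define r2 where "r2 = norm x2"
  have r: "r1 > 0" "r2 > 0" using x by (auto simp: r1_def r2_def)
  have rD: "r1 \<le> r2 + D" unfolding r1_def r2_def using dx norm_triangle_sub[of x1 x2]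
    by (smt (verit) norm_minus_commute norm_triangle_ineq2)
  have y1: "norm y1 ^ 2 = 2 / r1" using E1 unfolding spec_energy_def r1_def by (simp add: field_simps)
  have y2: "norm y2 ^ 2 = 2 * spec_energy x2 y2 + 2 / r2" unfolding spec_energy_def r2_def by simp
  have p: "\<bar>ang_mom x1 y1\<bar>^2 \<le> 2*r1"
  proof -
    have "\<bar>ang_mom x1 y1\<bar>^2 \<le> r1^2 * (2/r1)" using angmom_sq[of x1 y1] y1 by (simp add: r1_def)
    also have "\<dots> = 2*r1" using r by (simp add: power2_eq_square)
    finally show ?thesis .
  qed
  have q: "\<bar>ang_mom x2 y2\<bar>^2 \<le> 2*r2 + 2*r2^2 * spec_energy x2 y2"
  proof -
    have "\<bar>ang_mom x2 y2\<bar>^2 \<le> r2^2 * (2 * spec_energy x2 y2 + 2 / r2)" using angmom_sq[of x2 y2] y2 by (simp add: r2_def)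
    also have "\<dots> = 2*r2 + 2*r2^2 * spec_energy x2 y2" using r by (simp add: power2_eq_square algebra_simps)
    finally show ?thesis .
  qed
  have l: "\<bar>L\<bar> > 0" "2*\<bar>L\<bar> \<le> \<bar>ang_mom x1 y1\<bar> + \<bar>ang_mom x2 y2\<bar>" using L0 L by (auto simp: abs_if split: if_splits)
  have "-spec_energy x2 y2/2 * \<bar>L\<bar>^2 \<le> (1-e^2)*(1+e)^2/(16*e^2)"
    by (rule core[OF r rD _ p _ q l e]) (auto simp: D)
  thus ?thesis using E1 by simp
qed


lemma comp_deriv: fixes f :: "real \<Rightarrow> real^2"
  assumes "(f has_vector_derivative f') F" shows "((\<lambda>t. f t $ i) has_real_derivative f' $ i) F"
proof -
  have "((\<lambda>t. f t $ i) has_derivative (\<lambda>h. (h *\<^sub>R f') $ i)) F"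
    using bounded_linear.has_derivative[OF bounded_linear_vec_nth assms[unfolded has_vector_derivative_def]] by simp
  moreover have "(\<lambda>h. (h *\<^sub>R f') $ i) = (*) (f' $ i)" by (auto simp: mult.commute)
  ultimately show ?thesis unfolding has_field_derivative_def by simp
qed

lemma norm2: "norm (x::real^2) = sqrt (x$1^2 + x$2^2)"
  by (metis nsq norm_ge_zero real_sqrt_unique)

lemma kep_comp: "kepler_acc x $ i = - (x$i / sqrt (x$1^2 + x$2^2) ^ 3)"
  unfolding kepler_acc_def norm2[symmetric] by simp

lemma spec_E_comp: "spec_energy y w = (w$1 * w$1 + w$2 * w$2)/2 - inverse (sqrt (y$1 * y$1 + y$2 * y$2))"
proof -
  have h1: "norm w ^ 2 = w$1 * w$1 + w$2 * w$2" using nsq[of w] by (simp only: power2_eq_square)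
  have h2: "norm y = sqrt (y$1 * y$1 + y$2 * y$2)" using norm2[of y] by (simp only: power2_eq_square)
  show ?thesis unfolding spec_energy_def h1 h2 by (simp only: divide_inverse mult_1)
qed

lemma dE: fixes x v :: "real \<Rightarrow> real^2"
  assumes dx: "(x has_vector_derivative v t) (at t within S)"
    and dv: "(v has_vector_derivative kepler_acc (x t)) (at t within S)" and x0: "x t \<noteq> 0"
  shows "((\<lambda>s. spec_energy (x s) (v s)) has_real_derivative 0) (at t within S)"
proof -
  note c = comp_deriv[OF dx] comp_deriv[OF dv]
  have pos: "(x t $1)^2 + (x t $2)^2 > 0" using x0 nsq[of "x t"] by (metis zero_less_norm_iff zero_less_power)
  define a where "a = kepler_acc (x t)"
  define \<rho> where "\<rho> = (\<lambda>s. x s$1 * x s$1 + x s$2 * x s$2)"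
  have pos': "\<rho> t > 0" using pos by (simp add: \<rho>_def power2_eq_square)
  have eq: "(\<lambda>s. spec_energy (x s) (v s)) = (\<lambda>s. (v s$1 * v s$1 + v s$2 * v s$2)/2 - inverse (sqrt (\<rho> s)))"
    unfolding \<rho>_def spec_E_comp ..
  have d1: "((\<lambda>s. (v s$1 * v s$1 + v s$2 * v s$2)/2) has_real_derivative (v t$1 * a$1 + v t$2 * a$2)) (at t within S)"
    unfolding a_def by (auto intro!: derivative_eq_intros c simp: algebra_simps)
  have dr: "(\<rho> has_real_derivative 2*(x t$1 * v t$1 + x t$2 * v t$2)) (at t within S)"
    unfolding \<rho>_def by (auto intro!: derivative_eq_intros c simp: algebra_simps)
  have ds: "((\<lambda>s. sqrt (\<rho> s)) has_real_derivative (inverse (sqrt (\<rho> t)) / 2) * (2*(x t$1 * v t$1 + x t$2 * v t$2))) (at t within S)"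
    by (rule DERIV_chain2[OF DERIV_real_sqrt[OF pos'] dr])
  have di: "((\<lambda>s. inverse (sqrt (\<rho> s))) has_real_derivative - ((inverse (sqrt (\<rho> t)) / 2) * (2*(x t$1 * v t$1 + x t$2 * v t$2)) * inverse (sqrt (\<rho> t) ^ Suc (Suc 0)))) (at t within S)"
    by (rule DERIV_inverse_fun[OF ds]) (use pos' in simp)
  have "((\<lambda>s. spec_energy (x s) (v s)) has_real_derivative (v t$1 * a$1 + v t$2 * a$2) - - ((inverse (sqrt (\<rho> t)) / 2) * (2*(x t$1 * v t$1 + x t$2 * v t$2)) * inverse (sqrt (\<rho> t) ^ Suc (Suc 0)))) (at t within S)"
    unfolding eq by (rule DERIV_diff[OF d1 di])
  moreover have "(v t$1 * a$1 + v t$2 * a$2) - - ((inverse (sqrt (\<rho> t)) / 2) * (2*(x t$1 * v t$1 + x t$2 * v t$2)) * inverse (sqrt (\<rho> t) ^ Suc (Suc 0))) = 0"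
  proof -
    have sq: "sqrt (\<rho> t) > 0" using pos' by simp
    define \<sigma> where "\<sigma> = sqrt (\<rho> t)"
    define p where "p = x t$1 * v t$1 + x t$2 * v t$2"
    have "a$1 = - (x t$1 / \<sigma> ^ 3)" "a$2 = - (x t$2 / \<sigma> ^ 3)"
      unfolding a_def kep_comp \<rho>_def \<sigma>_def by (simp_all add: power2_eq_square)
    hence A: "v t$1 * a$1 + v t$2 * a$2 = - (p / \<sigma>^3)" unfolding p_def
      by (simp add: add_divide_distrib[symmetric] algebra_simps)
    have B: "(inverse \<sigma> / 2) * (2*p) * inverse (\<sigma> ^ Suc (Suc 0)) = p / \<sigma>^3"
      using sq unfolding \<sigma>_def[symmetric] by (simp add: field_simps power3_eq_cube)
    show ?thesis using A B unfolding \<sigma>_def[symmetric] p_def[symmetric] by simp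
  qed
  ultimately show ?thesis by simp
qed
lemma dL: fixes x v :: "real \<Rightarrow> real^2"
  assumes dx: "(x has_vector_derivative v t) (at t within S)"
    and dv: "(v has_vector_derivative kepler_acc (x t)) (at t within S)"
  shows "((\<lambda>s. ang_mom (x s) (v s)) has_real_derivative 0) (at t within S)"
proof -
  note c = comp_deriv[OF dx] comp_deriv[OF dv]
  have "((\<lambda>s. ang_mom (x s) (v s)) has_real_derivative
      (v t$1 * v t$2 + x t$1 * kepler_acc (x t)$2) - (v t$2 * v t$1 + x t$2 * kepler_acc (x t)$1)) (at t within S)"
    unfolding ang_mom_def by (auto intro!: derivative_eq_intros c simp: algebra_simps)
  moreover have "(v t$1 * v t$2 + x t$1 * kepler_acc (x t)$2) - (v t$2 * v t$1 + x t$2 * kepler_acc (x t)$1) = 0"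
    unfolding kep_comp by (simp add: algebra_simps)
  ultimately show ?thesis by simp
qed


lemma collision:
  fixes x1 x2 ua ub :: "real^2" and D eps :: real
  assumes nx: "norm (x1 - x2) = D" and D: "D > 0" and eps: "0 \<le> eps" "eps \<le> 1/2"
  defines "n \<equiv> (1 / D) *\<^sub>R (x1 - x2)"
  defines "w \<equiv> ua - ub"
  defines "v1 \<equiv> ((1/2) *\<^sub>R ua + (1/2) *\<^sub>R ub) + (1/2) *\<^sub>R collide_w eps n w"
  defines "v2 \<equiv> ((1/2) *\<^sub>R ua + (1/2) *\<^sub>R ub) - (1/2) *\<^sub>R collide_w eps n w"
  shows "v2 = ub - (v1 - ua)"
    and "\<And>s. ang_mom x1 (ua + s *\<^sub>R (v1 - ua)) + ang_mom x2 (ub - s *\<^sub>R (v1 - ua)) = ang_mom x1 ua + ang_mom x2 ub"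
    and "\<And>s. 0 \<le> s \<Longrightarrow> s \<le> 1 \<Longrightarrow> spec_energy x1 (ua + s *\<^sub>R (v1 - ua)) + spec_energy x2 (ub - s *\<^sub>R (v1 - ua))
           \<le> spec_energy x1 ua + spec_energy x2 ub"
proof -
  define c where "c = n \<bullet> w"
  define k where "k = - (1 - eps) * c"
  have \<Delta>: "v1 - ua = k *\<^sub>R n"
    unfolding v1_def k_def c_def collide_w_def w_def by (simp add: vec_eq_iff field_simps)
  show "v2 = ub - (v1 - ua)"
    unfolding v1_def v2_def by (simp add: vec_eq_iff field_simps)
  show "ang_mom x1 (ua + s *\<^sub>R (v1 - ua)) + ang_mom x2 (ub - s *\<^sub>R (v1 - ua)) = ang_mom x1 ua + ang_mom x2 ub" for s
    unfolding \<Delta> n_def ang_mom_def by (simp add: algebra_simps)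
  have nn: "n \<bullet> n = 1"
  proof -
    have "n \<bullet> n = (1/D)^2 * (norm (x1 - x2))^2" unfolding n_def power2_norm_eq_inner by (simp add: power2_eq_square)
    thus ?thesis using nx D by (simp add: power_divide)
  qed
  show "spec_energy x1 (ua + s *\<^sub>R (v1 - ua)) + spec_energy x2 (ub - s *\<^sub>R (v1 - ua))
           \<le> spec_energy x1 ua + spec_energy x2 ub" if s: "0 \<le> s" "s \<le> 1" for s
  proof -
    have ic: "ua \<bullet> n = n \<bullet> ua" "ub \<bullet> n = n \<bullet> ub" by (simp_all add: inner_commute)
    have K: "norm (ua + s *\<^sub>R (v1 - ua)) ^ 2 + norm (ub - s *\<^sub>R (v1 - ua)) ^ 2
        = norm ua ^ 2 + norm ub ^ 2 + 2 * s * k * c + 2 * s^2 * k^2"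
      unfolding \<Delta> power2_norm_eq_inner c_def w_def
      by (simp add: inner_add_left inner_add_right inner_diff_left inner_diff_right nn algebra_simps power2_eq_square ic)
    have "2 * s * k * c + 2 * s^2 * k^2 = - 2 * s * (1 - eps) * c^2 * (1 - s * (1 - eps))"
      unfolding k_def by (simp add: algebra_simps power2_eq_square)
    also have "\<dots> \<le> 0"
    proof -
      have "s * (1 - eps) \<le> 1" using s eps by (intro mult_le_one) auto
      hence "0 \<le> s * (1 - eps) * c^2 * (1 - s * (1 - eps))" using s eps by simp
      thus ?thesis by simp
    qed
    finally show ?thesis using K unfolding spec_energy_def by simp
  qed
qed


lemma tendsto_E: "(X \<longlongrightarrow> x0) F \<Longrightarrow> (V \<longlongrightarrow> v0) F \<Longrightarrow> x0 \<noteq> 0 \<Longrightarrow>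
   ((\<lambda>s. spec_energy (X s) (V s)) \<longlongrightarrow> spec_energy x0 v0) F"
  unfolding spec_energy_def by (intro tendsto_intros) auto

lemma tendsto_L: "(X \<longlongrightarrow> x0) F \<Longrightarrow> (V \<longlongrightarrow> v0) F \<Longrightarrow> x0 \<noteq> 0 \<Longrightarrow>
   ((\<lambda>s. ang_mom (X s) (V s)) \<longlongrightarrow> ang_mom x0 v0) F"
  unfolding ang_mom_def by (intro tendsto_intros) auto

locale body =
  fixes C :: "real set" and x v :: "real \<Rightarrow> real^2" and Fq :: "real^2 \<Rightarrow> real^2 \<Rightarrow> real"
  assumes C0: "C \<subseteq> {0<..}"
    and cx: "continuous_on {0..} x" and nz: "\<And>t. t \<ge> 0 \<Longrightarrow> x t \<noteq> 0"
    and der: "\<And>t. t \<ge> 0 \<Longrightarrow> t \<notin> C \<Longrightarrow> (x has_vector_derivative v t) (at t within {0..}) \<and>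
                (v has_vector_derivative kepler_acc (x t)) (at t within {0..})"
    and Fd: "\<And>x v t S. (x has_vector_derivative v t) (at t within S) \<Longrightarrow>
               (v has_vector_derivative kepler_acc (x t)) (at t within S) \<Longrightarrow> x t \<noteq> 0 \<Longrightarrow>
               ((\<lambda>s. Fq (x s) (v s)) has_real_derivative 0) (at t within S)"
    and Ft: "\<And>X V x0 v0 (F::real filter). (X \<longlongrightarrow> x0) F \<Longrightarrow> (V \<longlongrightarrow> v0) F \<Longrightarrow> x0 \<noteq> 0 \<Longrightarrow>
               ((\<lambda>s. Fq (X s) (V s)) \<longlongrightarrow> Fq x0 v0) F"
begin

lemma const_on:
  assumes "a \<ge> 0" "\<And>s. s \<in> S \<Longrightarrow> s > a \<and> s \<notin> C" "convex S"
  shows "\<exists>c. \<forall>s\<in>S. Fq (x s) (v s) = c"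
proof (rule has_field_derivative_zero_constant[OF assms(3)])
  fix s assume s: "s \<in> S"
  hence s0: "s \<ge> 0" "s \<notin> C" using assms by force+
  have "S \<subseteq> {0..}" using assms by force
  hence "((\<lambda>s. Fq (x s) (v s)) has_real_derivative 0) (at s within {0..})"
    using Fd der[OF s0] nz[OF s0(1)] by blast
  thus "((\<lambda>s. Fq (x s) (v s)) has_real_derivative 0) (at s within S)"
    using \<open>S \<subseteq> {0..}\<close> by (rule DERIV_subset)
qed

lemma x_left: assumes "0 \<le> a" "a < b" shows "(x \<longlongrightarrow> x b) (at_left b)"
proof -
  have "(x \<longlongrightarrow> x b) (at b within {0..})" using cx assms unfolding continuous_on_def by auto
  moreover have "at_left b \<le> at b within {0..}" 
    using at_le[of "{a..b}" "{0..}" b] assms at_within_Icc_at_left[of a b] by auto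
  ultimately show ?thesis by (rule tendsto_mono[rotated])
qed

lemma x_right: assumes "0 \<le> a" "a < b" shows "(x \<longlongrightarrow> x a) (at_right a)"
proof -
  have "(x \<longlongrightarrow> x a) (at a within {0..})" using cx assms unfolding continuous_on_def by auto
  moreover have "at_right a \<le> at a within {0..}" 
    using at_le[of "{a..b}" "{0..}" a] assms at_within_Icc_at_right[of a b] by auto
  ultimately show ?thesis by (rule tendsto_mono[rotated])
qed

lemma seg_right:
  assumes a: "0 \<le> a" "a \<le> t" and noC: "\<And>s. a < s \<Longrightarrow> s \<le> t \<Longrightarrow> s \<notin> C"
    and vr: "(v \<longlongrightarrow> v a) (at_right a)"
  shows "Fq (x t) (v t) = Fq (x a) (v a)"
proof (cases "a = t")
  case False
  hence at: "a < t" using a by simp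
  obtain c where c: "\<forall>s\<in>{a<..t}. Fq (x s) (v s) = c"
    using const_on[of a "{a<..t}"] a noC by auto
  have "((\<lambda>s. Fq (x s) (v s)) \<longlongrightarrow> Fq (x a) (v a)) (at_right a)"
    by (rule Ft[OF x_right[OF a(1) at] vr nz[OF a(1)]])
  moreover have "((\<lambda>s. Fq (x s) (v s)) \<longlongrightarrow> c) (at_right a)"
  proof -
    have "eventually (\<lambda>s. s \<in> {a<..<t}) (at_right a)" by (rule eventually_at_right_real[OF at])
    hence "eventually (\<lambda>s. c = Fq (x s) (v s)) (at_right a)"
      by (rule eventually_mono) (use c in auto)
    thus ?thesis by (rule Lim_transform_eventually[OF tendsto_const])
  qed
  ultimately have "Fq (x a) (v a) = c" by (rule tendsto_unique[rotated]) simp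
  thus ?thesis using c at by auto
qed simp

lemma seg_left:
  assumes a: "0 \<le> a" "a < b" and noC: "\<And>s. a < s \<Longrightarrow> s < b \<Longrightarrow> s \<notin> C"
    and vl: "(v \<longlongrightarrow> u) (at_left b)"
  shows "Fq (x b) u = Fq (x ((a+b)/2)) (v ((a+b)/2))"
proof -
  obtain c where c: "\<forall>s\<in>{a<..<b}. Fq (x s) (v s) = c"
    using const_on[of a "{a<..<b}"] a noC by auto
  have "((\<lambda>s. Fq (x s) (v s)) \<longlongrightarrow> Fq (x b) u) (at_left b)"
    by (rule Ft[OF x_left[OF a] vl nz]) (use a in simp)
  moreover have "((\<lambda>s. Fq (x s) (v s)) \<longlongrightarrow> c) (at_left b)"
  proof -
    have "eventually (\<lambda>s. s \<in> {a<..<b}) (at_left b)" by (rule eventually_at_left_real[OF a(2)])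
    hence "eventually (\<lambda>s. c = Fq (x s) (v s)) (at_left b)"
      by (rule eventually_mono) (use c in auto)
    thus ?thesis by (rule Lim_transform_eventually[OF tendsto_const])
  qed
  ultimately have "Fq (x b) u = c" by (rule tendsto_unique[rotated]) simp
  thus ?thesis using c a by auto
qed

end


lemma cont_E: "x \<noteq> 0 \<Longrightarrow> continuous_on S (\<lambda>s::real. spec_energy x (u + s *\<^sub>R d))"
  unfolding spec_energy_def by (intro continuous_intros) auto

lemma post_ok:
  fixes x1 x2 u1 u2 :: "real^2" and D eps E L e :: real
  assumes nx: "norm (x1 - x2) = D" and D: "D > 0" and eps: "0 \<le> eps" "eps \<le> 1/2"
    and x: "x1 \<noteq> 0" "x2 \<noteq> 0"
    and preE: "(1/2) * spec_energy x1 u1 + (1/2) * spec_energy x2 u2 \<le> E"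
    and preL: "(1/2) * ang_mom x1 u1 + (1/2) * ang_mom x2 u2 = L"
    and pre1: "spec_energy x1 u1 < 0" and pre2: "spec_energy x2 u2 < 0"
    and e: "0 < e" "e < 1/2" and L0: "L \<noteq> 0" and DL: "D = 2*L^2*(1-2*e)/(1-e^2)"
    and EL: "E * L ^ 2 < - ((1 - e ^ 2) * (1 + e) ^ 2) / (16 * e ^ 2)"
    and v1: "v1 = ((1/2) *\<^sub>R u1 + (1/2) *\<^sub>R u2) + (1/2) *\<^sub>R collide_w eps ((1 / D) *\<^sub>R (x1 - x2)) (u1 - u2)"
    and v2: "v2 = ((1/2) *\<^sub>R u1 + (1/2) *\<^sub>R u2) - (1/2) *\<^sub>R collide_w eps ((1 / D) *\<^sub>R (x1 - x2)) (u1 - u2)"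
  shows "(1/2) * spec_energy x1 v1 + (1/2) * spec_energy x2 v2 \<le> E \<and>
         (1/2) * ang_mom x1 v1 + (1/2) * ang_mom x2 v2 = L \<and>
         spec_energy x1 v1 < 0 \<and> spec_energy x2 v2 < 0"
proof -
  note col = collision[OF nx D eps, where ua=u1 and ub=u2, folded v1 v2]
  define d where "d = v1 - u1"
  have Y1: "u1 + 1 *\<^sub>R d = v1" and Y2: "u2 - 1 *\<^sub>R d = v2" using col(1) by (auto simp: d_def)
  have Ls: "(1/2) * ang_mom x1 (u1 + s *\<^sub>R d) + (1/2) * ang_mom x2 (u2 - s *\<^sub>R d) = L" for s
    using col(2)[of s] preL unfolding d_def by simp
  have Es: "(1/2) * spec_energy x1 (u1 + s *\<^sub>R d) + (1/2) * spec_energy x2 (u2 - s *\<^sub>R d) \<le> E"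
    if "0 \<le> s" "s \<le> 1" for s
    using col(3)[OF that] preE unfolding d_def by simp
  have L2: "L^2 > 0" using L0 by simp
  have nx': "norm (x2 - x1) = D" using nx by (simp add: norm_minus_commute)
  have key: False if s: "0 \<le> s" "s \<le> 1"
     and z: "spec_energy x1 (u1 + s *\<^sub>R d) = 0 \<or> spec_energy x2 (u2 - s *\<^sub>R d) = 0" for s
  proof -
    have "((1/2) * spec_energy x1 (u1 + s *\<^sub>R d) + (1/2) * spec_energy x2 (u2 - s *\<^sub>R d)) * L^2
          \<ge> -((1-e^2)*(1+e)^2)/(16*e^2)"
      using z
    proof
      assume z1: "spec_energy x1 (u1 + s *\<^sub>R d) = 0"
      show ?thesis by (rule static[OF _ x z1 e L0 DL Ls[symmetric]]) (use nx in simp)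
    next
      assume z2: "spec_energy x2 (u2 - s *\<^sub>R d) = 0"
      have "((1/2) * spec_energy x2 (u2 - s *\<^sub>R d) + (1/2) * spec_energy x1 (u1 + s *\<^sub>R d)) * L^2
          \<ge> -((1-e^2)*(1+e)^2)/(16*e^2)"
        by (rule static[OF _ x(2) x(1) z2 e L0 DL]) (use nx' Ls[of s] in auto)
      thus ?thesis by (simp add: add.commute)
    qed
    moreover have "((1/2) * spec_energy x1 (u1 + s *\<^sub>R d) + (1/2) * spec_energy x2 (u2 - s *\<^sub>R d)) * L^2 \<le> E * L^2"
      using Es[OF s] L2 by (intro mult_right_mono) auto
    ultimately show False using EL by linarith
  qed
  have c1: "spec_energy x1 v1 < 0"
  proof (rule ccontr)
    assume "\<not> ?thesis"
    hence "spec_energy x1 (u1 + 0 *\<^sub>R d) \<le> 0" "0 \<le> spec_energy x1 (u1 + 1 *\<^sub>R d)"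
      using pre1 Y1 by auto
    then obtain s where "s \<in> {0..1}" "spec_energy x1 (u1 + s *\<^sub>R d) = 0"
      using IVT'[of "\<lambda>s. spec_energy x1 (u1 + s *\<^sub>R d)" 0 0 1] cont_E[OF x(1)] by auto
    thus False using key by auto
  qed
  have c2: "spec_energy x2 v2 < 0"
  proof (rule ccontr)
    assume "\<not> ?thesis"
    hence "spec_energy x2 (u2 - 0 *\<^sub>R d) \<le> 0" "0 \<le> spec_energy x2 (u2 - 1 *\<^sub>R d)"
      using pre2 Y2 by auto
    moreover have "continuous_on {0..1} (\<lambda>s. spec_energy x2 (u2 - s *\<^sub>R d))"
      using cont_E[OF x(2), of "{0..1}" u2 "-d"] by simp
    ultimately obtain s where "s \<in> {0..1}" "spec_energy x2 (u2 - s *\<^sub>R d) = 0"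
      using IVT'[of "\<lambda>s. spec_energy x2 (u2 - s *\<^sub>R d)" 0 0 1] by auto
    thus False using key by auto
  qed
  show ?thesis using Es[of 1] Ls[of 1] Y1 Y2 c1 c2 by simp
qed


theorem theorem3:
  fixes m R1 R2 D eps :: real
    and x1 v1 x2 v2 :: "real \<Rightarrow> real^2"
  assumes "m > 0" and "R1 > 0" and "R2 > 0" and "D = R1 + R2"
    and "0 \<le> eps" and "eps \<le> 1/2"
    and "motion m m D eps x1 v1 x2 v2"
    and "spec_energy (x1 0) (v1 0) < 0" and "spec_energy (x2 0) (v2 0) < 0"
    and "\<gamma> = 2 * L ^ 2 / D" and "\<gamma> > 1"
    and "e = \<gamma> - sqrt (\<gamma> ^ 2 - \<gamma> + 1)"
    and "E = (1/2) * spec_energy (x1 0) (v1 0) + (1/2) * spec_energy (x2 0) (v2 0)"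
    and "L = (1/2) * ang_mom (x1 0) (v1 0) + (1/2) * ang_mom (x2 0) (v2 0)"
    and "E * L ^ 2 < - ((1 - e ^ 2) * (1 + e) ^ 2) / (16 * e ^ 2)"
  shows "\<forall>t\<ge>0. spec_energy (x1 t) (v1 t) < 0 \<and> spec_energy (x2 t) (v2 t) < 0"
proof -
  note A = assms
  have mu: "m / (m + m) = 1/2" using A(1) by simp
  have Dpos: "D > 0" using A(2,3,4) by simp
  obtain C where C0: "C \<subseteq> {0<..}" and Cfin: "\<And>T. finite (C \<inter> {..T})"
    and cx1: "continuous_on {0..} x1" and cx2: "continuous_on {0..} x2"
    and nz: "\<And>t. t \<ge> 0 \<Longrightarrow> x1 t \<noteq> 0 \<and> x2 t \<noteq> 0 \<and> dist (x1 t) (x2 t) \<ge> D"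
    and der: "\<And>t. t \<ge> 0 \<Longrightarrow> t \<notin> C \<Longrightarrow>
          (x1 has_vector_derivative v1 t) (at t within {0..}) \<and>
          (v1 has_vector_derivative kepler_acc (x1 t)) (at t within {0..}) \<and>
          (x2 has_vector_derivative v2 t) (at t within {0..}) \<and>
          (v2 has_vector_derivative kepler_acc (x2 t)) (at t within {0..})"
    and col: "\<And>t. t \<in> C \<Longrightarrow> \<exists>u1 u2.
          (v1 \<longlongrightarrow> u1) (at_left t) \<and> (v2 \<longlongrightarrow> u2) (at_left t) \<and>
          (v1 \<longlongrightarrow> v1 t) (at_right t) \<and> (v2 \<longlongrightarrow> v2 t) (at_right t) \<and>
          dist (x1 t) (x2 t) = D \<and>
          ((1 / D) *\<^sub>R (x1 t - x2 t)) \<bullet> (u1 - u2) < 0 \<and>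
          v1 t = ((1/2) *\<^sub>R u1 + (1/2) *\<^sub>R u2) + (1/2) *\<^sub>R collide_w eps ((1 / D) *\<^sub>R (x1 t - x2 t)) (u1 - u2) \<and>
          v2 t = ((1/2) *\<^sub>R u1 + (1/2) *\<^sub>R u2) - (1/2) *\<^sub>R collide_w eps ((1 / D) *\<^sub>R (x1 t - x2 t)) (u1 - u2)"
    using A(7) unfolding motion_def Let_def mu by blast
  define sq where "sq = sqrt (\<gamma> ^ 2 - \<gamma> + 1)"
  have g1: "\<gamma> > 1" using A(11) .
  have gq: "\<gamma> ^ 2 - \<gamma> + 1 = (\<gamma> - 1/2)^2 + 3/4" by (simp add: power2_eq_square algebra_simps)
  have gpos: "\<gamma> ^ 2 - \<gamma> + 1 \<ge> 0" unfolding gq by (intro add_nonneg_nonneg) auto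
  have sq2: "sq ^ 2 = \<gamma> ^ 2 - \<gamma> + 1" unfolding sq_def by (rule real_sqrt_pow2[OF gpos])
  have sq0: "sq \<ge> 0" unfolding sq_def using gpos by simp
  have "sq ^ 2 < \<gamma> ^ 2" unfolding sq2 using g1 by linarith
  hence "sq < \<gamma>" using g1 power2_less_imp_less[of sq \<gamma>] by linarith
  hence e0: "0 < e" unfolding A(12) sq_def[symmetric] by linarith
  have "(\<gamma> - 1/2) ^ 2 < sq ^ 2" unfolding sq2 gq by linarith
  hence "\<gamma> - 1/2 < sq" using sq0 power2_less_imp_less[of "\<gamma> - 1/2" sq] by linarith
  hence e1: "e < 1/2" unfolding A(12) sq_def[symmetric] by linarith
  have "(\<gamma> - e) ^ 2 = \<gamma> ^ 2 - \<gamma> + 1" unfolding A(12) sq_def[symmetric] sq2[symmetric] by simp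
  hence ge: "\<gamma> * (1 - 2*e) = 1 - e^2" by (simp add: power2_eq_square algebra_simps)
  have gD: "\<gamma> * D = 2 * L^2" unfolding A(10) using Dpos by simp
  have e2: "e^2 < 1" proof -
      have "e*e < 1*1" using e0 e1 by (intro mult_strict_mono) auto
      thus ?thesis by (simp add: power2_eq_square)
    qed
  have DL: "D = 2*L^2*(1-2*e)/(1-e^2)"
  proof -
    have "D * (1 - e^2) = 2*L^2*(1-2*e)" unfolding ge[symmetric] gD[symmetric] by simp
    thus ?thesis using e2 by (simp add: field_simps)
  qed
  have L0: "L \<noteq> 0" using gD g1 Dpos by auto
  have nz1: "\<And>t. t \<ge> 0 \<Longrightarrow> x1 t \<noteq> 0" and nz2: "\<And>t. t \<ge> 0 \<Longrightarrow> x2 t \<noteq> 0" using nz by auto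
  have der1: "\<And>t. t \<ge> 0 \<Longrightarrow> t \<notin> C \<Longrightarrow> (x1 has_vector_derivative v1 t) (at t within {0..}) \<and>
                (v1 has_vector_derivative kepler_acc (x1 t)) (at t within {0..})"
   and der2: "\<And>t. t \<ge> 0 \<Longrightarrow> t \<notin> C \<Longrightarrow> (x2 has_vector_derivative v2 t) (at t within {0..}) \<and>
                (v2 has_vector_derivative kepler_acc (x2 t)) (at t within {0..})" using der by auto
  interpret E1b: body C x1 v1 spec_energy
    by (rule body.intro[OF C0 cx1 nz1 der1 dE tendsto_E]) auto
  interpret L1b: body C x1 v1 ang_mom
    by (rule body.intro[OF C0 cx1 nz1 der1 dL tendsto_L]) auto
  interpret E2b: body C x2 v2 spec_energy
    by (rule body.intro[OF C0 cx2 nz2 der2 dE tendsto_E]) auto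
  interpret L2b: body C x2 v2 ang_mom
    by (rule body.intro[OF C0 cx2 nz2 der2 dL tendsto_L]) auto
  have vr: "(v1 \<longlongrightarrow> v1 a) (at_right a) \<and> (v2 \<longlongrightarrow> v2 a) (at_right a)" if "a = 0 \<or> a \<in> C" for a
  proof (cases "a = 0")
    case True
    have "0 \<notin> C" using C0 by auto
    hence d: "(v1 has_vector_derivative kepler_acc (x1 0)) (at 0 within {0..})"
             "(v2 has_vector_derivative kepler_acc (x2 0)) (at 0 within {0..})" using der[of 0] by auto
    have le: "at_right (0::real) \<le> at 0 within {0..}"
      using at_le[of "{0..1}" "{0..}" "0::real"] at_within_Icc_at_right[of "0::real" 1] by auto
    have "(v1 \<longlongrightarrow> v1 0) (at 0 within {0..})" "(v2 \<longlongrightarrow> v2 0) (at 0 within {0..})"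
      using has_vector_derivative_continuous[OF d(1)] has_vector_derivative_continuous[OF d(2)]
      by (simp_all add: continuous_within)
    hence "(v1 \<longlongrightarrow> v1 0) (at_right 0)" "(v2 \<longlongrightarrow> v2 0) (at_right 0)"
      using le by (auto intro: tendsto_mono)
    thus ?thesis using True by simp
  next
    case False
    hence "a \<in> C" using that by simp
    thus ?thesis using col by blast
  qed
  define Q where "Q = (\<lambda>t. (1/2) * spec_energy (x1 t) (v1 t) + (1/2) * spec_energy (x2 t) (v2 t) \<le> E \<and>
      (1/2) * ang_mom (x1 t) (v1 t) + (1/2) * ang_mom (x2 t) (v2 t) = L \<and>
      spec_energy (x1 t) (v1 t) < 0 \<and> spec_energy (x2 t) (v2 t) < 0)"
  have transfer: "Q t" if "0 \<le> a" "a \<le> t" "\<And>s. a < s \<Longrightarrow> s \<le> t \<Longrightarrow> s \<notin> C"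
      "a = 0 \<or> a \<in> C" "Q a" for a t
  proof -
    note r = vr[OF that(4)]
    have "spec_energy (x1 t) (v1 t) = spec_energy (x1 a) (v1 a)"
      by (rule E1b.seg_right[OF that(1,2,3) conjunct1[OF r]])
    moreover have "spec_energy (x2 t) (v2 t) = spec_energy (x2 a) (v2 a)"
      by (rule E2b.seg_right[OF that(1,2,3) conjunct2[OF r]])
    moreover have "ang_mom (x1 t) (v1 t) = ang_mom (x1 a) (v1 a)"
      by (rule L1b.seg_right[OF that(1,2,3) conjunct1[OF r]])
    moreover have "ang_mom (x2 t) (v2 t) = ang_mom (x2 a) (v2 a)"
      by (rule L2b.seg_right[OF that(1,2,3) conjunct2[OF r]])
    ultimately show ?thesis using that(5) unfolding Q_def by simp
  qed
  have Q0: "Q 0" unfolding Q_def using A(8,9,13,14) by simp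
  have main: "\<And>t. 0 \<le> t \<Longrightarrow> card (C \<inter> {..t}) = n \<Longrightarrow> Q t" for n
  proof (induction n rule: less_induct)
    case (less n t)
    define K where "K = C \<inter> {..t}"
    have Kf: "finite K" unfolding K_def by (rule Cfin)
    show ?case
    proof (cases "K = {}")
      case True
      show ?thesis
        by (rule transfer[of 0 t]) (use less.prems True Q0 in \<open>auto simp: K_def\<close>)
    next
      case False
      define c where "c = Max K"
      have cK: "c \<in> K" unfolding c_def using Kf False by simp
      have cC: "c \<in> C" "c \<le> t" using cK by (auto simp: K_def)
      have c0: "c > 0" using cC C0 by auto
      have noC: "s \<notin> C" if "c < s" "s \<le> t" for s
      proof
        assume "s \<in> C" hence "s \<in> K" using that by (auto simp: K_def)
        hence "s \<le> c" unfolding c_def using Kf by simp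
        thus False using that by simp
      qed
      have Qc: "Q c"
      proof -
        define K' where "K' = C \<inter> {..<c}"
        have "K' \<subseteq> K" using cC unfolding K'_def K_def by auto
        hence K'f: "finite K'" using Kf by (rule finite_subset)
        define a where "a = (if K' = {} then 0 else Max K')"
        have a0: "0 \<le> a" and ac: "a < c"
        proof (atomize (full), cases "K' = {}")
          case True thus "0 \<le> a \<and> a < c" using c0 by (simp add: a_def)
        next
          case False
          hence "Max K' \<in> K'" using K'f by simp
          hence "Max K' \<in> C" "Max K' < c" by (auto simp: K'_def)
          hence "0 < Max K'" "Max K' < c" using C0 by auto
          thus "0 \<le> a \<and> a < c" using False by (simp add: a_def)
        qed
        have noCa: "s \<notin> C" if "a < s" "s < c" for s
        proof
          assume "s \<in> C" hence "s \<in> K'" using that by (auto simp: K'_def)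
          hence "s \<le> a" unfolding a_def using K'f by auto
          thus False using that by simp
        qed
        define mid where "mid = (a + c) / 2"
        have mid: "0 \<le> mid" "a < mid" "mid < c" using a0 ac by (auto simp: mid_def)
        have sub: "C \<inter> {..mid} \<subseteq> K'" using noCa mid by (force simp: K'_def)
        have "K' \<subset> K" using cK cC unfolding K'_def K_def by auto
        hence "card K' < card K" using Kf by (intro psubset_card_mono)
        moreover have "card (C \<inter> {..mid}) \<le> card K'" using sub K'f by (rule card_mono[rotated])
        ultimately have "card (C \<inter> {..mid}) < n" using less.prems by (simp add: K_def)
        hence Qm: "Q mid" using less.IH mid(1) by blast
        obtain u1 u2 where u: "(v1 \<longlongrightarrow> u1) (at_left c)" "(v2 \<longlongrightarrow> u2) (at_left c)"
          "dist (x1 c) (x2 c) = D"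
          "v1 c = ((1/2) *\<^sub>R u1 + (1/2) *\<^sub>R u2) + (1/2) *\<^sub>R collide_w eps ((1 / D) *\<^sub>R (x1 c - x2 c)) (u1 - u2)"
          "v2 c = ((1/2) *\<^sub>R u1 + (1/2) *\<^sub>R u2) - (1/2) *\<^sub>R collide_w eps ((1 / D) *\<^sub>R (x1 c - x2 c)) (u1 - u2)"
          using col[OF cC(1)] by blast
        have p1: "spec_energy (x1 c) u1 = spec_energy (x1 mid) (v1 mid)"
          unfolding mid_def by (rule E1b.seg_left[OF a0 ac noCa u(1)])
        have p2: "spec_energy (x2 c) u2 = spec_energy (x2 mid) (v2 mid)"
          unfolding mid_def by (rule E2b.seg_left[OF a0 ac noCa u(2)])
        have p3: "ang_mom (x1 c) u1 = ang_mom (x1 mid) (v1 mid)"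
          unfolding mid_def by (rule L1b.seg_left[OF a0 ac noCa u(1)])
        have p4: "ang_mom (x2 c) u2 = ang_mom (x2 mid) (v2 mid)"
          unfolding mid_def by (rule L2b.seg_left[OF a0 ac noCa u(2)])
        have nx: "norm (x1 c - x2 c) = D" using u(3) by (simp add: dist_norm)
        show ?thesis unfolding Q_def
          by (rule post_ok[OF nx Dpos A(5,6) nz1 nz2 _ _ _ _ e0 e1 L0 DL A(15) u(4,5)])
            (use Qm p1 p2 p3 p4 c0 in \<open>auto simp: Q_def\<close>)
      qed
      show ?thesis
        by (rule transfer[of c t]) (use c0 cC noC Qc in auto)
    qed
  qed
  show ?thesis using main Q_def by blast
qed

end
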